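(* Let $\theta$ be a universal formula in the first-order language with equality over a single binary relation symbol $R$, using only the variables $x,y,z$. If $(P,Z)\models\theta[w]$ for every assignment $w:\{x,y,z\}\to P$, then $(Q,T)\models\theta[v]$ for every assignment $v:\{x,y,z\}\to Q$.
   Context: $(P,Z)$ is the "pentagon": $P=\{0,1,2,3,4\}$, $Z=\{(i,j): i<5,\ j\equiv i\pm1 \pmod 5\}$. $(Q,T)$ is the "square": $Q=\{0,1,2,3\}$, $T=\{(i,j): i<4,\ j\equiv i\pm1 \pmod 4\}$; $R$ is interpreted by $Z$, resp. $T$. A universal formula is one built from atomic formulas ($Ruv$ or $u=v$, $u,v$ variables) and negations of atomic formulas using only conjunction, disjunction and universal quantification. "Using only the variables $x,y,z$" means every variable occurring, free or bound, is among $x,y,z$ (variables may be requantified). *)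

theory Defs
  imports Main
begin

datatype var = Vx | Vy | Vz

datatype ufm =
    RelA var var
  | EqA var var
  | NRelA var var
  | NEqA var var
  | Conj ufm ufm
  | Disj ufm ufm
  | Forall var ufm

fun sat :: "'a set \<Rightarrow> ('a \<Rightarrow> 'a \<Rightarrow> bool) \<Rightarrow> ufm \<Rightarrow> (var \<Rightarrow> 'a) \<Rightarrow> bool" where
  "sat D E (RelA u v) w = E (w u) (w v)"
| "sat D E (EqA u v) w = (w u = w v)"
| "sat D E (NRelA u v) w = (\<not> E (w u) (w v))"
| "sat D E (NEqA u v) w = (w u \<noteq> w v)"
| "sat D E (Conj f g) w = (sat D E f w \<and> sat D E g w)"
| "sat D E (Disj f g) w = (sat D E f w \<or> sat D E g w)"
| "sat D E (Forall v f) w = (\<forall>a\<in>D. sat D E f (w(v := a)))"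

definition pentP :: "nat set" where "pentP = {0..<5}"
definition pentZ :: "nat \<Rightarrow> nat \<Rightarrow> bool" where
  "pentZ i j = (i < 5 \<and> j < 5 \<and> (j = (i + 1) mod 5 \<or> i = (j + 1) mod 5))"

definition sqQ :: "nat set" where "sqQ = {0..<4}"
definition sqT :: "nat \<Rightarrow> nat \<Rightarrow> bool" where
  "sqT i j = (i < 4 \<and> j < 4 \<and> (j = (i + 1) mod 4 \<or> i = (j + 1) mod 4))"

end

theory Submission
  imports Defs
begin

lemma ext_core:
  "\<forall>p\<in>{0..<4::nat}. \<forall>q\<in>{0..<4::nat}. \<forall>p'\<in>{0..<5::nat}. \<forall>q'\<in>{0..<5::nat}.
     (p = q \<longleftrightarrow> p' = q') \<and> (sqT p q \<longleftrightarrow> pentZ p' q') \<longrightarrow>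
     (\<forall>b\<in>{0..<4::nat}. \<exists>a\<in>{0..<5::nat}. (b = p \<longleftrightarrow> a = p') \<and> (b = q \<longleftrightarrow> a = q')
        \<and> (sqT b p \<longleftrightarrow> pentZ a p') \<and> (sqT b q \<longleftrightarrow> pentZ a q'))"
proof -
  have e4: "{0..<4::nat} = {0,1,2,3}" by auto
  have e5: "{0..<5::nat} = {0,1,2,3,4}" by auto
  show ?thesis unfolding e4 e5 ball_simps bex_simps sqT_def pentZ_def
    by simp
qed

lemma symT: "sqT a b = sqT b a" unfolding sqT_def by auto
lemma symZ: "pentZ a b = pentZ b a" unfolding pentZ_def by auto
lemma irrT: "\<not> sqT a a" unfolding sqT_def by (auto simp: mod_Suc)
lemma irrZ: "\<not> pentZ a a" unfolding pentZ_def by (auto simp: mod_Suc)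

definition rel :: "(var \<Rightarrow> nat) \<Rightarrow> (var \<Rightarrow> nat) \<Rightarrow> bool" where
  "rel v w = ((\<forall>u. v u \<in> sqQ) \<and> (\<forall>u. w u \<in> pentP) \<and>
     (\<forall>i j. (v i = v j \<longleftrightarrow> w i = w j) \<and> (sqT (v i) (v j) \<longleftrightarrow> pentZ (w i) (w j))))"

lemma ext2:
  assumes "p \<in> sqQ" "q \<in> sqQ" "p' \<in> pentP" "q' \<in> pentP"
    "p = q \<longleftrightarrow> p' = q'" "sqT p q \<longleftrightarrow> pentZ p' q'" "b \<in> sqQ"
  shows "\<exists>a\<in>pentP. (b = p \<longleftrightarrow> a = p') \<and> (b = q \<longleftrightarrow> a = q')
        \<and> (sqT b p \<longleftrightarrow> pentZ a p') \<and> (sqT b q \<longleftrightarrow> pentZ a q')"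
  using ext_core[rule_format, of p q p' q' b] assms unfolding sqQ_def pentP_def by blast

lemma var_cases3: "\<And>u::var. u = Vx \<or> u = Vy \<or> u = Vz" by (case_tac u) auto

lemma rel_ext:
  assumes r: "rel v w" and b: "b \<in> sqQ"
  shows "\<exists>a\<in>pentP. rel (v(u:=b)) (w(u:=a))"
proof -
  obtain i j where ij: "\<And>t. t = u \<or> t = i \<or> t = j" and iu: "i \<noteq> u" "j \<noteq> u"
  proof -
    have "\<exists>i j. (\<forall>t. t = u \<or> t = i \<or> t = j) \<and> i \<noteq> u \<and> j \<noteq> u"
      by (cases u) (use var_cases3 in blast)+
    then show ?thesis using that by blast
  qed
  from r have R: "\<And>s t. (v s = v t \<longleftrightarrow> w s = w t) \<and> (sqT (v s) (v t) \<longleftrightarrow> pentZ (w s) (w t))"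
    and vr: "\<And>t. v t \<in> sqQ" and wr: "\<And>t. w t \<in> pentP" unfolding rel_def by auto
  obtain a where a: "a \<in> pentP" "(b = v i \<longleftrightarrow> a = w i)" "(b = v j \<longleftrightarrow> a = w j)"
        "(sqT b (v i) \<longleftrightarrow> pentZ a (w i))" "(sqT b (v j) \<longleftrightarrow> pentZ a (w j))"
    using ext2[OF vr[of i] vr[of j] wr[of i] wr[of j] _ _ b] R by blast
  have a': "(v i = b) = (w i = a)" "(v j = b) = (w j = a)" "sqT (v i) b = pentZ (w i) a"
     "sqT (v j) b = pentZ (w j) a"
    using a(2) apply blast
    using a(3) apply blast
    using a(4) symT[of "v i" b] symZ[of "w i" a] apply metis
    using a(5) symT[of "v j" b] symZ[of "w j" a] apply metis
    done
  have R1: "\<And>s t. (v s = v t) = (w s = w t)" and R2: "\<And>s t. sqT (v s) (v t) = pentZ (w s) (w t)"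
    using R by auto
  have vi: "(v(u:=b)) i = v i" "(v(u:=b)) j = v j" "(w(u:=a)) i = w i" "(w(u:=a)) j = w j"
    using iu by auto
  have "rel (v(u:=b)) (w(u:=a))"
    unfolding rel_def
  proof (intro conjI allI)
    fix t show "(v(u:=b)) t \<in> sqQ" using vr b by auto
  next
    fix t show "(w(u:=a)) t \<in> pentP" using wr a by auto
  next
    fix s t
    show "((v(u := b)) s = (v(u := b)) t) = ((w(u := a)) s = (w(u := a)) t)"
      using ij[of s] ij[of t] iu
      by (elim disjE; hypsubst; simp only: fun_upd_same vi a a' R1 simp_thms)
    show "sqT ((v(u := b)) s) ((v(u := b)) t) = pentZ ((w(u := a)) s) ((w(u := a)) t)"
      using ij[of s] ij[of t] iu
      by (elim disjE; hypsubst; simp only: fun_upd_same vi a a' R2 irrT irrZ simp_thms)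
  qed
  with a show ?thesis by blast
qed

lemma transfer:
  "rel v w \<Longrightarrow> sat pentP pentZ \<theta> w \<Longrightarrow> sat sqQ sqT \<theta> v"
proof (induction \<theta> arbitrary: v w)
  case (Forall u f)
  show ?case
  proof (simp, intro ballI)
    fix b assume "b \<in> sqQ"
    then obtain a where a: "a \<in> pentP" "rel (v(u:=b)) (w(u:=a))" using rel_ext Forall.prems by blast
    have "sat pentP pentZ f (w(u:=a))" using Forall.prems(2) a(1) by simp
    then show "sat sqQ sqT f (v(u:=b))" using Forall.IH a(2) by blast
  qed
qed (auto simp: rel_def)

theorem lemma2:
  fixes \<theta> :: ufm
  assumes "\<forall>w :: var \<Rightarrow> nat. (\<forall>v. w v \<in> pentP) \<longrightarrow> sat pentP pentZ \<theta> w"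
  shows "\<forall>v :: var \<Rightarrow> nat. (\<forall>u. v u \<in> sqQ) \<longrightarrow> sat sqQ sqT \<theta> v"
proof (intro allI impI)
  fix v :: "var \<Rightarrow> nat" assume v: "\<forall>u. v u \<in> sqQ"
  have r0: "rel (\<lambda>_. 0) (\<lambda>_. 0)" unfolding rel_def sqQ_def pentP_def by (auto simp: irrT irrZ)
  obtain a1 where a1: "rel ((\<lambda>_. 0)(Vx := v Vx)) ((\<lambda>_. 0)(Vx := a1))" using rel_ext[OF r0] v by blast
  obtain a2 where a2: "rel ((\<lambda>_. 0)(Vx := v Vx, Vy := v Vy)) ((\<lambda>_. 0)(Vx := a1, Vy := a2))"
    using rel_ext[OF a1] v by blast
  obtain a3 where a3: "rel ((\<lambda>_. 0)(Vx := v Vx, Vy := v Vy, Vz := v Vz)) ((\<lambda>_. 0)(Vx := a1, Vy := a2, Vz := a3))"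
    using rel_ext[OF a2] v by blast
  have "(\<lambda>_. 0)(Vx := v Vx, Vy := v Vy, Vz := v Vz) = v"
    by (rule ext, case_tac x) auto
  with a3 have r: "rel v ((\<lambda>_. 0)(Vx := a1, Vy := a2, Vz := a3))" by simp
  then have "sat pentP pentZ \<theta> ((\<lambda>_. 0)(Vx := a1, Vy := a2, Vz := a3))"
    using assms unfolding rel_def by blast
  with r show "sat sqQ sqT \<theta> v" by (rule transfer)
qed

end
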